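(* Let $D(z)=\frac{1-\sqrt{1-4z^2}}{2z^2}$, $E(z)=zD(z)=\frac{1-\sqrt{1-4z^2}}{2z}$ and $M_{up}(z,u)=\frac{uE(z)}{1-uE(z)}$. Then for every $k\ge 1$, \[ F_k(z,u)=\frac{1}{z^{k-2}}\frac{d}{dz}\left(z^{k-1}\,\frac{u\,F_{k-1}(z,u)-E(z)\,F_{k-1}(z,E(z))}{u-E(z)}\,M_{up}(z,u)\right), \] where $F_0(z,u)=1$; and for every $k\ge 0$, \[ B_k(z)=F_k(z,E(z))\,D(z). \]
   Context: A bicolored Dyck meander is a finite sequence of steps from $\{U_1,U_2,D\}$, where $U_1$ and $U_2$ raise the height by $1$ and $D$ lowers it by $1$, starting at height $0$ and never going below height $0$; its length is its number of steps. A bicolored Dyck path is a bicolored Dyck meander ending at height $0$. The weight of such a path is the product, over all its $U_2$ steps, of $m+j-1$, where that $U_2$ step is the $m$-th step of the path and the $j$-th $U_2$ step of the path ($U_1$ and $D$ steps have weight $1$). For $k\ge1$, let $f_{k,n,\ell}$ be the total weight of bicolored Dyck meanders of length $n$ with exactly $k$ steps $U_2$, whose last step is a $U_2$ step, and which end at height $\ell$; set $F_k(z,u)=\sum_{n,\ell\ge 0}f_{k,n,\ell}z^nu^\ell$. For $k\ge 0$, $B_k(z)$ is the sum over all bicolored Dyck paths with exactly $k$ steps $U_2$ of (weight)$\cdot z^{\text{length}}$. *)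

theory Defs
  imports "HOL-Analysis.Analysis"
begin

datatype step = U1 | U2 | Dn

fun step_val :: "step \<Rightarrow> int" where
  "step_val U1 = 1" | "step_val U2 = 1" | "step_val Dn = -1"

definition height :: "step list \<Rightarrow> int" where
  "height xs = sum_list (map step_val xs)"

definition meander :: "step list \<Rightarrow> bool" where
  "meander xs \<longleftrightarrow> (\<forall>i\<le>length xs. height (take i xs) \<ge> 0)"

definition num_U2 :: "step list \<Rightarrow> nat" where
  "num_U2 xs = length (filter (\<lambda>s. s = U2) xs)"

text \<open>Weight: product over U2 steps of (m + j - 1), where the step is the m-th step
  (m = i+1 for 0-based position i) and the j-th U2 step (j = number of U2 among the first m steps).\<close>
definition weight :: "step list \<Rightarrow> nat" where
  "weight xs = (\<Prod>i\<in>{i. i < length xs \<and> xs ! i = U2}. (Suc i) + num_U2 (take (Suc i) xs) - 1)"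

definition paths_len :: "nat \<Rightarrow> step list set" where
  "paths_len n = {xs. set xs \<subseteq> {U1, U2, Dn} \<and> length xs = n}"

definition fcoef :: "nat \<Rightarrow> nat \<Rightarrow> nat \<Rightarrow> nat" where
  "fcoef k n l = (\<Sum>xs\<in>{xs\<in>paths_len n. meander xs \<and> num_U2 xs = k \<and> xs \<noteq> [] \<and>
       last xs = U2 \<and> height xs = int l}. weight xs)"

definition bcoef :: "nat \<Rightarrow> nat \<Rightarrow> nat" where
  "bcoef k n = (\<Sum>xs\<in>{xs\<in>paths_len n. meander xs \<and> num_U2 xs = k \<and> height xs = 0}. weight xs)"

definition Fgf :: "nat \<Rightarrow> complex \<Rightarrow> complex \<Rightarrow> complex" where
  "Fgf k z u = (if k = 0 then 1 else
     (\<Sum>n. \<Sum>l\<le>n. of_nat (fcoef k n l) * z ^ n * u ^ l))"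

definition Bgf :: "nat \<Rightarrow> complex \<Rightarrow> complex" where
  "Bgf k z = (\<Sum>n. of_nat (bcoef k n) * z ^ n)"

definition Dgf :: "complex \<Rightarrow> complex" where
  "Dgf z = (1 - csqrt (1 - 4 * z\<^sup>2)) / (2 * z\<^sup>2)"

definition Egf :: "complex \<Rightarrow> complex" where
  "Egf z = (1 - csqrt (1 - 4 * z\<^sup>2)) / (2 * z)"

definition Mup :: "complex \<Rightarrow> complex \<Rightarrow> complex" where
  "Mup z u = u * Egf z / (1 - u * Egf z)"

end

theory Submission
  imports Defs
begin


lemma height_Nil[simp]: "height [] = 0" by (simp add: height_def)
lemma height_Cons[simp]: "height (x # xs) = step_val x + height xs" by (simp add: height_def)
lemma height_append[simp]: "height (xs @ ys) = height xs + height ys" by (simp add: height_def)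

lemma num_U2_Nil[simp]: "num_U2 [] = 0" by (simp add: num_U2_def)
lemma num_U2_Cons[simp]: "num_U2 (x # xs) = (if x = U2 then 1 else 0) + num_U2 xs" by (simp add: num_U2_def)
lemma num_U2_append[simp]: "num_U2 (xs @ ys) = num_U2 xs + num_U2 ys" by (simp add: num_U2_def)
lemma num_U2_0_iff: "num_U2 xs = 0 \<longleftrightarrow> U2 \<notin> set xs"
  by (auto simp: num_U2_def filter_empty_conv)

definition okh :: "int \<Rightarrow> step list \<Rightarrow> bool" where
  "okh c s \<longleftrightarrow> (\<forall>i\<le>length s. c + height (take i s) \<ge> 0)"

lemma okh_Nil[simp]: "okh c [] \<longleftrightarrow> c \<ge> 0" by (simp add: okh_def)

lemma okh_Cons[simp]: "okh c (x # s) \<longleftrightarrow> c \<ge> 0 \<and> okh (c + step_val x) s"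
proof
  assume a: "okh c (x # s)"
  have "c \<ge> 0" using a[unfolded okh_def, rule_format, of 0] by simp
  moreover have "okh (c + step_val x) s" unfolding okh_def
  proof (intro allI impI)
    fix i assume "i \<le> length s"
    thus "0 \<le> c + step_val x + height (take i s)"
      using a[unfolded okh_def, rule_format, of "Suc i"] by (simp add: add.assoc)
  qed
  ultimately show "c \<ge> 0 \<and> okh (c + step_val x) s" by blast
next
  assume a: "c \<ge> 0 \<and> okh (c + step_val x) s"
  show "okh c (x # s)" unfolding okh_def
  proof (intro allI impI)
    fix i assume "i \<le> length (x # s)"
    thus "0 \<le> c + height (take i (x # s))"
      using a unfolding okh_def by (cases i) (auto simp: add.assoc)
  qed
qed

lemma okh_nonneg: "okh c s \<Longrightarrow> c \<ge> 0"
  unfolding okh_def by (metis add.right_neutral height_Nil le0 take0)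

lemma okh_append: "okh c (xs @ ys) \<longleftrightarrow> okh c xs \<and> okh (c + height xs) ys"
  by (induction xs arbitrary: c) (auto simp: add.assoc dest: okh_nonneg)

lemma meander_okh: "meander xs \<longleftrightarrow> okh 0 xs"
  by (simp add: meander_def okh_def)

lemma okh_height: "okh c s \<Longrightarrow> c + height s \<ge> 0"
  unfolding okh_def by (metis order_refl take_all)

lemma okh_mono: "okh c s \<Longrightarrow> c \<le> d \<Longrightarrow> okh d s"
  unfolding okh_def by force

lemma height_le_length: "height s \<le> int (length s)"
proof (induction s)
  case (Cons x s) then show ?case by (cases x) auto
qed simp

lemma height_ge_neg_length: "- int (length s) \<le> height s"
proof (induction s)
  case (Cons x s) then show ?case by (cases x) auto
qed simp

lemma weight_alt: "weight xs = (\<Prod>i\<in>{i. i < length xs \<and> xs ! i = U2}. Suc i + num_U2 (take (Suc i) xs) - 1)"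
  by (simp add: weight_def)

lemma weight_append_noU2:
  assumes "U2 \<notin> set ys"
  shows "weight (xs @ ys) = weight xs"
proof -
  have S: "{i. i < length (xs @ ys) \<and> (xs @ ys) ! i = U2} = {i. i < length xs \<and> xs ! i = U2}"
  proof (intro set_eqI iffI; clarsimp)
    fix i assume "i < length xs + length ys" "(xs @ ys) ! i = U2"
    note a = this
    show "i < length xs \<and> xs ! i = U2"
    proof (cases "i < length xs")
      case True thus ?thesis using a by (simp add: nth_append)
    next
      case False
      hence "ys ! (i - length xs) = U2" using a by (simp add: nth_append)
      moreover have "i - length xs < length ys" using a False by simp
      ultimately have "U2 \<in> set ys" by (metis nth_mem)
      thus ?thesis using assms by simp
    qed
  next
    fix i assume "i < length xs" "xs ! i = U2"
    then show "(xs @ ys) ! i = U2" by (simp add: nth_append)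
  qed
  show ?thesis unfolding weight_def S
    by (intro prod.cong refl) (simp)
qed

lemma weight_Nil: "weight [] = 1" by (simp add: weight_def)

lemma weight_noU2: "U2 \<notin> set ys \<Longrightarrow> weight ys = 1"
  using weight_append_noU2[of ys "[]"] by (simp add: weight_Nil)

lemma weight_snoc_U2:
  "weight (xs @ [U2]) = weight xs * (length xs + num_U2 xs + 1)"
proof -
  have S: "{i. i < length (xs @ [U2]) \<and> (xs @ [U2]) ! i = U2} = insert (length xs) {i. i < length xs \<and> xs ! i = U2}"
    by (auto simp: nth_append less_Suc_eq)
  have "weight (xs @ [U2]) = (length xs + num_U2 xs + 1) *
     (\<Prod>i\<in>{i. i < length xs \<and> xs ! i = U2}. Suc i + num_U2 (take (Suc i) (xs @ [U2])) - 1)"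
    unfolding weight_def S by (subst prod.insert) simp_all
  also have "(\<Prod>i\<in>{i. i < length xs \<and> xs ! i = U2}. Suc i + num_U2 (take (Suc i) (xs @ [U2])) - 1) = weight xs"
    unfolding weight_def by (intro prod.cong refl) simp
  finally show ?thesis by simp
qed

lemma card_U2_positions: "card {i. i < length xs \<and> xs ! i = U2} = num_U2 xs"
  unfolding num_U2_def by (rule length_filter_conv_card[symmetric])

lemma weight_bound: "weight xs \<le> (2 * length xs) ^ num_U2 xs"
proof -
  have "weight xs \<le> (\<Prod>i\<in>{i. i < length xs \<and> xs ! i = U2}. 2 * length xs)"
    unfolding weight_def
  proof (rule prod_mono)
    fix i assume "i \<in> {i. i < length xs \<and> xs ! i = U2}"
    hence i: "i < length xs" by simp
    have "num_U2 (take (Suc i) xs) \<le> length (take (Suc i) xs)" unfolding num_U2_def by (rule length_filter_le)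
    thus "0 \<le> Suc i + num_U2 (take (Suc i) xs) - 1 \<and> Suc i + num_U2 (take (Suc i) xs) - 1 \<le> 2 * length xs" using i by simp
  qed
  also have "\<dots> = (2 * length xs) ^ num_U2 xs" by (simp add: card_U2_positions)
  finally show ?thesis .
qed

lemma paths_len_all: "paths_len n = {xs. length xs = n}"
proof -
  have x: "x \<in> {U1, U2, Dn}" for x :: step by (cases x) simp_all
  have "set xs \<subseteq> {U1, U2, Dn}" for xs using x by blast
  thus ?thesis by (auto simp: paths_len_def)
qed

lemma finite_paths_len: "finite {xs :: step list. length xs = n}"
  using finite_lists_length_eq[of "{U1,U2,Dn}" n] paths_len_all[of n] by (simp add: paths_len_def)

lemma card_paths_len: "card {xs :: step list. length xs = n} = 3 ^ n"
  using card_lists_length_eq[of "{U1,U2,Dn}" n] paths_len_all[of n] by (simp add: paths_len_def numeral_3_eq_3)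



lemma sum_pow_geom:
  fixes x :: real
  assumes "\<bar>x\<bar> < 1"
  shows "summable (\<lambda>n. real n ^ j * x ^ n)"
  using assms
proof (induction j arbitrary: x)
  case 0
  then show ?case by simp
next
  case (Suc j)
  have "summable (\<lambda>n. diffs (\<lambda>n. real n ^ j) n * x ^ n)"
    by (rule termdiff_converges[where K=1]) (use Suc in auto)
  hence "summable (\<lambda>n. x * (diffs (\<lambda>n. real n ^ j) n * x ^ n))"
    by (rule summable_mult)
  hence "summable (\<lambda>n. real (Suc n) ^ Suc j * x ^ Suc n)"
    by (simp add: diffs_def algebra_simps)
  thus ?case by (subst summable_Suc_iff[symmetric]) 
qed

lemma group_by_length:
  fixes f :: "step list \<Rightarrow> 'a::banach"
  assumes "(f has_sum s) S"
  shows "(\<lambda>n. \<Sum>xs\<in>{xs\<in>S. length xs = n}. f xs) sums s"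
proof -
  have bij: "bij_betw (\<lambda>xs. (length xs, xs)) S (Sigma UNIV (\<lambda>n. {xs\<in>S. length xs = n}))"
    by (rule bij_betwI[where g=snd]) auto
  have "((\<lambda>p. f (snd p)) has_sum s) (Sigma UNIV (\<lambda>n. {xs\<in>S. length xs = n}))"
    using has_sum_reindex_bij_betw[OF bij, of "\<lambda>p. f (snd p)"] assms by simp
  moreover have "((\<lambda>y. f (snd (n, y))) has_sum (\<Sum>xs\<in>{xs\<in>S. length xs = n}. f xs)) {xs\<in>S. length xs = n}" for n
  proof -
    have "finite {xs\<in>S. length xs = n}"
      by (rule finite_subset[OF _ finite_paths_len[of n]]) auto
    thus ?thesis by (intro has_sum_finiteI) auto
  qed
  ultimately have "((\<lambda>n. \<Sum>xs\<in>{xs\<in>S. length xs = n}. f xs) has_sum s) UNIV"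
    by (rule has_sum_SigmaD)
  thus ?thesis by (rule has_sum_imp_sums)
qed

lemma group_by_length':
  fixes f :: "step list \<Rightarrow> 'a::banach"
  assumes "f summable_on S"
  shows "(\<lambda>n. \<Sum>xs\<in>{xs\<in>S. length xs = n}. f xs) sums (infsum f S)"
  using group_by_length assms has_sum_infsum by blast

lemma sum_len_fiber: "(\<Sum>xs\<in>{xs::step list. length xs = n}. g (length xs)) = 3 ^ n * (g n :: real)"
  using card_paths_len[of n] by simp

lemma master_summable:
  assumes r: "0 \<le> r" "r < 1/3"
  shows "(\<lambda>xs::step list. real (length xs) ^ j * r ^ length xs) summable_on UNIV"
proof (rule nonneg_bdd_above_summable_on)
  show "\<And>x. x \<in> UNIV \<Longrightarrow> 0 \<le> real (length x) ^ j * r ^ length x" using r by simp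
  have sm: "summable (\<lambda>n. real n ^ j * (3 * r) ^ n)"
    by (rule sum_pow_geom) (use r in auto)
  define T where "T = (\<Sum>n. real n ^ j * (3 * r) ^ n)"
  show "bdd_above (sum (\<lambda>xs::step list. real (length xs) ^ j * r ^ length xs) ` {F. F \<subseteq> UNIV \<and> finite F})"
  proof (rule bdd_aboveI[where M=T], clarsimp)
    fix F :: "step list set" assume F: "finite F"
    define N where "N = Max (insert 0 (length ` F))"
    have sub: "F \<subseteq> (\<Union>n\<in>{..N}. {xs::step list. length xs = n})"
    proof
      fix xs assume "xs \<in> F"
      hence "length xs \<le> N" unfolding N_def using F by (intro Max_ge) auto
      thus "xs \<in> (\<Union>n\<in>{..N}. {xs::step list. length xs = n})" by blast
    qed
    have "(\<Sum>xs\<in>F. real (length xs) ^ j * r ^ length xs) \<le>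
          (\<Sum>xs\<in>(\<Union>n\<in>{..N}. {xs::step list. length xs = n}). real (length xs) ^ j * r ^ length xs)"
    proof (rule sum_mono2)
      show "finite (\<Union>n\<in>{..N}. {xs::step list. length xs = n})"
        using finite_paths_len by blast
      show "F \<subseteq> (\<Union>n\<in>{..N}. {xs::step list. length xs = n})" by (rule sub)
      show "0 \<le> real (length b) ^ j * r ^ length b" for b using r by simp
    qed
    also have "\<dots> = (\<Sum>n\<in>{..N}. \<Sum>xs\<in>{xs::step list. length xs = n}. real (length xs) ^ j * r ^ length xs)"
      by (rule sum.UNION_disjoint) (simp_all add: finite_paths_len, blast)
    also have "\<dots> = (\<Sum>n\<in>{..N}. real n ^ j * (3 * r) ^ n)"
    proof (rule sum.cong[OF refl])
      fix n
      have "(\<Sum>xs\<in>{xs::step list. length xs = n}. real (length xs) ^ j * r ^ length xs)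
          = (\<Sum>xs\<in>{xs::step list. length xs = n}. real n ^ j * r ^ n)"
        by (rule sum.cong) auto
      also have "\<dots> = real (card {xs::step list. length xs = n}) * (real n ^ j * r ^ n)"
        by (rule sum_constant)
      also have "\<dots> = real n ^ j * (3 * r) ^ n"
        unfolding card_paths_len by (simp add: power_mult_distrib)
      finally show "(\<Sum>xs\<in>{xs::step list. length xs = n}. real (length xs) ^ j * r ^ length xs) = real n ^ j * (3 * r) ^ n" .
    qed
    also have "\<dots> \<le> T" unfolding T_def
      by (rule sum_le_suminf[OF sm]) (use r in simp_all)
    finally show "(\<Sum>xs\<in>F. real (length xs) ^ j * r ^ length xs) \<le> T" .
  qed
qed

lemma dom_summable:
  fixes f :: "step list \<Rightarrow> complex"
  assumes r: "0 \<le> r" "r < 1/3"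
  assumes b: "\<And>xs. xs \<in> S \<Longrightarrow> norm (f xs) \<le> C * real (length xs) ^ j * r ^ length xs"
  shows "f summable_on S"
proof -
  have "(\<lambda>xs::step list. real (length xs) ^ j * r ^ length xs) summable_on S"
    using summable_on_subset_banach[OF master_summable[OF r] subset_UNIV] by blast
  hence "(\<lambda>xs::step list. C * (real (length xs) ^ j * r ^ length xs)) summable_on S"
    by (rule summable_on_cmult_right)
  hence "(\<lambda>xs. norm (f xs)) summable_on S"
    by (rule summable_on_comparison_test) (use b in \<open>auto simp: mult.assoc\<close>)
  thus ?thesis by (rule abs_summable_summable)
qed

definition tm :: "complex \<Rightarrow> complex \<Rightarrow> step list \<Rightarrow> complex" where
  "tm z u xs = of_nat (weight xs) * z ^ length xs * u ^ nat (height xs)"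

lemma tm_bound:
  assumes "norm u \<le> 1"
  shows "norm (tm z u xs) \<le> 2 ^ num_U2 xs * real (length xs) ^ num_U2 xs * norm z ^ length xs"
proof -
  have "norm (tm z u xs) = real (weight xs) * norm z ^ length xs * norm u ^ nat (height xs)"
    by (simp add: tm_def norm_mult norm_power)
  also have "\<dots> \<le> real (weight xs) * norm z ^ length xs * 1"
    by (intro mult_left_mono) (use assms in \<open>auto simp: power_le_one\<close>)
  also have "\<dots> \<le> real ((2 * length xs) ^ num_U2 xs) * norm z ^ length xs"
  proof -
    have "real (weight xs) \<le> real ((2 * length xs) ^ num_U2 xs)"
      by (simp only: of_nat_le_iff) (rule weight_bound)
    thus ?thesis by (simp add: mult_right_mono)
  qed
  also have "\<dots> = 2 ^ num_U2 xs * real (length xs) ^ num_U2 xs * norm z ^ length xs"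
    by (simp add: power_mult_distrib)
  finally show ?thesis .
qed

lemma tm_summable:
  assumes "norm z < 1/3" "norm u \<le> 1" "\<And>xs. xs \<in> S \<Longrightarrow> num_U2 xs = j"
  shows "tm z u summable_on S"
proof (rule dom_summable[where r="norm z" and C="2^j" and j=j])
  fix xs assume "xs \<in> S"
  hence "num_U2 xs = j" using assms by auto
  thus "norm (tm z u xs) \<le> 2 ^ j * real (length xs) ^ j * norm z ^ length xs"
    using tm_bound[OF assms(2), of z xs] by simp
qed (use assms in auto)

lemma norm_infsum_geom:
  fixes f :: "step list \<Rightarrow> complex"
  assumes r: "norm z < 1/3" and sm: "f summable_on S"
  assumes b: "\<And>xs. xs \<in> S \<Longrightarrow> norm (f xs) \<le> norm z ^ length xs"
  shows "norm (infsum f S) \<le> 1 / (1 - 3 * norm z)"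
proof -
  have ms: "(\<lambda>xs::step list. norm z ^ length xs) summable_on UNIV"
    using master_summable[of "norm z" 0] r by simp
  have "norm (infsum f S) \<le> infsum (\<lambda>xs. norm (f xs)) S"
    by (rule norm_infsum_bound) (use sm summable_on_iff_abs_summable_on_complex in blast)
  also have "\<dots> \<le> infsum (\<lambda>xs::step list. norm z ^ length xs) UNIV"
    by (rule infsum_mono_neutral) (use b sm summable_on_iff_abs_summable_on_complex ms in auto)
  also have "\<dots> = (\<Sum>n. (3 * norm z) ^ n)"
  proof -
    have "(\<lambda>n. \<Sum>xs\<in>{xs::step list\<in>UNIV. length xs = n}. norm z ^ length xs) sums infsum (\<lambda>xs::step list. norm z ^ length xs) UNIV"
      by (rule group_by_length'[OF ms])
    moreover have "(\<Sum>xs\<in>{xs::step list\<in>UNIV. length xs = n}. norm z ^ length xs) = (3 * norm z) ^ n" for n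
      using sum_len_fiber[where n=n and g="\<lambda>n. norm z ^ n"] by (simp add: power_mult_distrib)
    ultimately show ?thesis by (simp add: sums_iff card_paths_len power_mult_distrib)
  qed
  also have "\<dots> = 1 / (1 - 3 * norm z)"
    by (rule suminf_geometric[THEN trans]) (use r in auto)
  finally show ?thesis .
qed



lemma has_sum_prod_image:
  fixes f :: "'x \<Rightarrow> complex"
  assumes inj: "inj_on g (Sigma A B)"
    and sm: "f summable_on (g ` Sigma A B)"
    and fval: "\<And>a b. a \<in> A \<Longrightarrow> b \<in> B a \<Longrightarrow> f (g (a, b)) = p a * q a b"
    and inner: "\<And>a. a \<in> A \<Longrightarrow> (q a has_sum Q a) (B a)"
  shows "((\<lambda>a. p a * Q a) has_sum infsum f (g ` Sigma A B)) A"
proof -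
  have "(f has_sum infsum f (g ` Sigma A B)) (g ` Sigma A B)" using sm by simp
  hence "((f \<circ> g) has_sum infsum f (g ` Sigma A B)) (Sigma A B)"
    using has_sum_reindex[OF inj] by blast
  moreover have "((\<lambda>b. (f \<circ> g) (a, b)) has_sum (p a * Q a)) (B a)" if "a \<in> A" for a
  proof -
    have "((\<lambda>b. p a * q a b) has_sum (p a * Q a)) (B a)"
      by (rule has_sum_cmult_right[OF inner[OF that]])
    thus ?thesis by (rule has_sum_cong[THEN iffD1, rotated]) (use fval that in auto)
  qed
  ultimately show ?thesis by (rule has_sum_SigmaD)
qed

definition W :: "nat \<Rightarrow> step list set" where
  "W c = {s. U2 \<notin> set s \<and> okh (int c) s}"

definition wt :: "complex \<Rightarrow> complex \<Rightarrow> nat \<Rightarrow> step list \<Rightarrow> complex" where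
  "wt z u c s = z ^ length s * u ^ nat (int c + height s)"

definition T :: "nat \<Rightarrow> complex \<Rightarrow> complex \<Rightarrow> complex" where
  "T c z u = infsum (wt z u c) (W c)"

definition Dy :: "step list set" where
  "Dy = {d \<in> W 0. height d = 0}"

definition Dsum :: "complex \<Rightarrow> complex" where
  "Dsum z = infsum (\<lambda>d. z ^ length d) Dy"

lemma W_num_U2: "s \<in> W c \<Longrightarrow> num_U2 s = 0"
  by (simp add: W_def num_U2_0_iff)

lemma summable_pow_len:
  fixes f :: "step list \<Rightarrow> complex"
  assumes "norm z < 1/3" "\<And>s. s \<in> S \<Longrightarrow> norm (f s) \<le> norm z ^ length s"
  shows "f summable_on S"
  by (rule dom_summable[where r="norm z" and C=1 and j=0]) (use assms in auto)

lemma wt_summable: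
  assumes "norm z < 1/3" "norm u \<le> 1"
  shows "wt z u c summable_on S"
proof (rule summable_pow_len[OF assms(1)])
  fix s
  have "norm (wt z u c s) = norm z ^ length s * norm u ^ nat (int c + height s)"
    by (simp add: wt_def norm_mult norm_power)
  also have "\<dots> \<le> norm z ^ length s * 1"
    by (intro mult_left_mono) (use assms in \<open>auto simp: power_le_one\<close>)
  finally show "norm (wt z u c s) \<le> norm z ^ length s" by simp
qed

lemma Dy_summable:
  fixes z :: complex and S :: "step list set"
  assumes "norm z < 1/3"
  shows "(\<lambda>d. z ^ length d) summable_on S"
  by (rule summable_pow_len[OF assms]) (simp add: norm_power)

lemma W0_decomp: "W 0 = insert [] ((\<lambda>s. U1 # s) ` W 1)"
proof (intro set_eqI iffI)
  fix s assume s: "s \<in> W 0"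
  show "s \<in> insert [] ((\<lambda>s. U1 # s) ` W 1)"
  proof (cases s)
    case (Cons x t)
    have "x \<noteq> U2" using s Cons by (auto simp: W_def)
    moreover have "x \<noteq> Dn"
    proof
      assume "x = Dn"
      hence "okh (-1) t" using s Cons by (simp add: W_def)
      thus False using okh_nonneg by fastforce
    qed
    ultimately have "x = U1" by (cases x) auto
    thus ?thesis using s Cons by (auto simp: W_def)
  qed simp
next
  fix s assume "s \<in> insert [] ((\<lambda>s. U1 # s) ` W 1)"
  thus "s \<in> W 0" by (auto simp: W_def)
qed

lemma T0_rec:
  assumes "norm z < 1/3" "norm u \<le> 1"
  shows "T 0 z u = 1 + z * T 1 z u"
proof -
  have "(wt z u 1 has_sum T 1 z u) (W 1)"
    unfolding T_def using wt_summable[OF assms] by simp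
  hence "((\<lambda>s. z * wt z u 1 s) has_sum (z * T 1 z u)) (W 1)"
    by (rule has_sum_cmult_right)
  hence "((wt z u 0 \<circ> (\<lambda>s. U1 # s)) has_sum (z * T 1 z u)) (W 1)"
    by (rule has_sum_cong[THEN iffD1, rotated]) (simp add: wt_def add.commute)
  hence "(wt z u 0 has_sum (z * T 1 z u)) ((\<lambda>s. U1 # s) ` W 1)"
    by (subst has_sum_reindex) auto
  hence "(wt z u 0 has_sum (wt z u 0 [] + z * T 1 z u)) (insert [] ((\<lambda>s. U1 # s) ` W 1))"
    by (intro has_sum_insert) auto
  hence "(wt z u 0 has_sum (1 + z * T 1 z u)) (W 0)"
    by (simp add: W0_decomp wt_def)
  thus ?thesis unfolding T_def by (rule infsumI)
qed

lemma first_passage: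
  "\<not> okh a s \<Longrightarrow> a \<ge> 0 \<Longrightarrow> U2 \<notin> set s \<Longrightarrow> \<exists>d s'. s = d @ Dn # s' \<and> okh a d \<and> a + height d = 0"
proof (induction s arbitrary: a)
  case Nil then show ?case by simp
next
  case (Cons x t)
  have nt: "\<not> okh (a + step_val x) t" using Cons.prems by simp
  show ?case
  proof (cases "a + step_val x < 0")
    case True
    hence "x = Dn" "a = 0" using Cons.prems by (cases x; auto)+
    thus ?thesis by (intro exI[of _ "[]"] exI[of _ t]) auto
  next
    case False
    then obtain d s' where "t = d @ Dn # s'" "okh (a + step_val x) d" "a + step_val x + height d = 0"
      using Cons.IH[OF nt] Cons.prems by force
    thus ?thesis using Cons.prems by (intro exI[of _ "x # d"] exI[of _ s']) (auto simp: add.assoc)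
  qed
qed

lemma not_okh_Dyck_Dn: "okh 0 d \<Longrightarrow> height d = 0 \<Longrightarrow> \<not> okh 0 (d @ Dn # s)"
  by (simp add: okh_append) (use okh_nonneg in fastforce)

lemma Dyck_split_inj:
  assumes eq: "d1 @ Dn # s1 = d2 @ Dn # s2"
    and d1: "okh 0 d1" "height d1 = 0" and d2: "okh 0 d2" "height d2 = 0"
  shows "d1 = d2 \<and> s1 = s2"
proof -
  obtain us where us: "(d1 = d2 @ us \<and> us @ Dn # s1 = Dn # s2) \<or> (d1 @ us = d2 \<and> Dn # s1 = us @ Dn # s2)"
    using eq by (auto simp: append_eq_append_conv2)
  thus ?thesis
  proof
    assume a: "d1 = d2 @ us \<and> us @ Dn # s1 = Dn # s2"
    show ?thesis
    proof (cases us)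
      case Nil thus ?thesis using a by simp
    next
      case (Cons y us')
      hence "d1 = d2 @ Dn # us'" using a by auto
      thus ?thesis using not_okh_Dyck_Dn[OF d2] d1 by simp
    qed
  next
    assume a: "d1 @ us = d2 \<and> Dn # s1 = us @ Dn # s2"
    show ?thesis
    proof (cases us)
      case Nil thus ?thesis using a by simp
    next
      case (Cons y us')
      hence "d2 = d1 @ Dn # us'" using a by auto
      thus ?thesis using not_okh_Dyck_Dn[OF d1] d2 by simp
    qed
  qed
qed

definition cat3 :: "step list \<times> step list \<Rightarrow> step list" where
  "cat3 p = fst p @ Dn # snd p"

lemma Wc_decomp:
  assumes "c \<ge> 1"
  shows "W c = W 0 \<union> cat3 ` (Sigma Dy (\<lambda>_. W (c - 1)))"
proof (intro set_eqI iffI)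
  fix s assume s: "s \<in> W c"
  show "s \<in> W 0 \<union> cat3 ` (Sigma Dy (\<lambda>_. W (c - 1)))"
  proof (cases "okh 0 s")
    case True thus ?thesis using s by (auto simp: W_def)
  next
    case False
    then obtain d s' where ds: "s = d @ Dn # s'" "okh 0 d" "height d = 0"
      using first_passage[of 0 s] s by (auto simp: W_def)
    have "okh (int c + height d - 1) s'" using s ds by (simp add: W_def okh_append)
    hence "s' \<in> W (c - 1)" "d \<in> Dy" using s ds assms by (auto simp: W_def Dy_def of_nat_diff)
    thus ?thesis using ds by (auto simp: cat3_def image_iff intro!: bexI[of _ "(d, s')"])
  qed
next
  fix s assume "s \<in> W 0 \<union> cat3 ` (Sigma Dy (\<lambda>_. W (c - 1)))"
  thus "s \<in> W c"
  proof
    assume "s \<in> W 0" thus ?thesis by (auto simp: W_def intro: okh_mono)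
  next
    assume "s \<in> cat3 ` (Sigma Dy (\<lambda>_. W (c - 1)))"
    then obtain d s' where "s = d @ Dn # s'" "d \<in> Dy" "s' \<in> W (c - 1)"
      by (auto simp: cat3_def)
    thus ?thesis using assms
      by (auto simp: W_def Dy_def okh_append of_nat_diff intro: okh_mono)
  qed
qed

lemma Tc_rec:
  assumes z: "norm z < 1/3" and u: "norm u \<le> 1" and c: "c \<ge> 1"
  shows "T c z u = u ^ c * T 0 z u + z * Dsum z * T (c - 1) z u"
proof -
  let ?I = "cat3 ` (Sigma Dy (\<lambda>_. W (c - 1)))"
  have inj: "inj_on cat3 (Sigma Dy (\<lambda>_. W (c - 1)))"
    by (rule inj_onI) (auto simp: cat3_def Dy_def W_def dest: Dyck_split_inj)
  have disj: "W 0 \<inter> ?I = {}"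
    by (auto simp: cat3_def Dy_def W_def not_okh_Dyck_Dn)
  have h1: "(wt z u c has_sum (u ^ c * T 0 z u)) (W 0)"
  proof -
    have "(wt z u 0 has_sum T 0 z u) (W 0)" unfolding T_def using wt_summable[OF z u] by simp
    hence "((\<lambda>s. u ^ c * wt z u 0 s) has_sum (u ^ c * T 0 z u)) (W 0)"
      by (rule has_sum_cmult_right)
    thus ?thesis
    proof (rule has_sum_cong[THEN iffD1, rotated])
      fix s assume "s \<in> W 0"
      hence "height s \<ge> 0" by (auto simp: W_def dest: okh_height)
      hence "nat (int c + height s) = c + nat (height s)" by simp
      thus "u ^ c * wt z u 0 s = wt z u c s" by (simp add: wt_def power_add)
    qed
  qed
  have h2: "(wt z u c has_sum (z * Dsum z * T (c - 1) z u)) ?I"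
  proof -
    have A: "((\<lambda>d. z ^ length d * (z * T (c - 1) z u)) has_sum infsum (wt z u c) ?I) Dy"
    proof (rule has_sum_prod_image[OF inj wt_summable[OF z u]])
      fix d s assume "d \<in> Dy" "s \<in> W (c - 1)"
      hence "height d = 0" by (auto simp: Dy_def)
      moreover have "nat (int c + (height d + (- 1 + height s))) = nat (int (c - 1) + height s)"
        using c \<open>height d = 0\<close> by (simp add: of_nat_diff)
      ultimately show "wt z u c (cat3 (d, s)) = z ^ length d * (z * wt z u (c - 1) s)"
        by (simp add: wt_def cat3_def power_add)
    next
      fix d assume "d \<in> Dy"
      have "(wt z u (c-1) has_sum T (c - 1) z u) (W (c - 1))" unfolding T_def using wt_summable[OF z u] by simp
      thus "((\<lambda>s. z * wt z u (c - 1) s) has_sum (z * T (c - 1) z u)) (W (c - 1))"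
        by (rule has_sum_cmult_right)
    qed
    have B: "((\<lambda>d. z ^ length d * (z * T (c - 1) z u)) has_sum (Dsum z * (z * T (c - 1) z u))) Dy"
      unfolding Dsum_def by (rule has_sum_cmult_left) (rule has_sum_infsum[OF Dy_summable[OF z]])
    have "infsum (wt z u c) ?I = z * Dsum z * T (c - 1) z u"
      using has_sum_unique[OF A B] by simp
    thus ?thesis using wt_summable[OF z u, of c ?I] by (metis has_sum_infsum)
  qed
  have "(wt z u c has_sum (u ^ c * T 0 z u + z * Dsum z * T (c - 1) z u)) (W c)"
    unfolding Wc_decomp[OF c] by (rule has_sum_Un_disjoint[OF h1 h2 disj])
  thus ?thesis unfolding T_def by (rule infsumI)
qed

lemma T_closed:
  assumes z: "norm z < 1/3" and u: "norm u \<le> 1"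
  shows "T c z u = (\<Sum>m\<le>c. (z * Dsum z) ^ (c - m) * u ^ m) * T 0 z u"
proof (induction c)
  case 0 then show ?case by simp
next
  case (Suc c)
  have "T (Suc c) z u = u ^ Suc c * T 0 z u + z * Dsum z * T c z u"
    using Tc_rec[OF z u, of "Suc c"] by simp
  also have "\<dots> = (u ^ Suc c + (\<Sum>m\<le>c. (z * Dsum z) ^ (Suc c - m) * u ^ m)) * T 0 z u"
    unfolding Suc by (simp add: sum_distrib_left algebra_simps Suc_diff_le power_Suc)
  also have "u ^ Suc c + (\<Sum>m\<le>c. (z * Dsum z) ^ (Suc c - m) * u ^ m) = (\<Sum>m\<le>Suc c. (z * Dsum z) ^ (Suc c - m) * u ^ m)"
    by (simp add: add.commute)
  finally show ?case .
qed

lemma T0_eq: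
  assumes z: "norm z < 1/3" and u: "norm u \<le> 1"
  shows "T 0 z u * (1 - z * u - z * (z * Dsum z)) = 1"
proof -
  have "T 1 z u = (u + z * Dsum z) * T 0 z u"
    using T_closed[OF z u, of 1] by (simp add: algebra_simps)
  hence h: "T 0 z u = 1 + z * ((u + z * Dsum z) * T 0 z u)" using T0_rec[OF z u] by simp
  show ?thesis using h by algebra
qed

lemma T_u0: "T 0 z 0 = Dsum z"
  unfolding T_def Dsum_def
proof (rule infsum_cong_neutral)
  fix s assume "s \<in> W 0 - Dy"
  hence "height s \<noteq> 0" "height s \<ge> 0" by (auto simp: Dy_def W_def dest: okh_height)
  thus "wt z 0 0 s = 0" by (simp add: wt_def)
qed (auto simp: Dy_def wt_def)

lemma Dsum_eq:
  assumes z: "norm z < 1/3"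
  shows "Dsum z * (1 - z * (z * Dsum z)) = 1"
  using T0_eq[OF z, of 0] by (simp add: T_u0)

lemma Dsum_bound:
  assumes z: "norm z < 1/3"
  shows "norm (Dsum z) \<le> 1 / (1 - 3 * norm z)"
  unfolding Dsum_def by (rule norm_infsum_geom[OF z Dy_summable[OF z]]) (simp add: norm_power)



definition Qs :: "nat \<Rightarrow> step list set" where
  "Qs j = {xs. meander xs \<and> num_U2 xs = j}"

definition Ps :: "nat \<Rightarrow> step list set" where
  "Ps j = {xs \<in> Qs j. xs \<noteq> [] \<and> last xs = U2}"

definition gsum :: "step list set \<Rightarrow> complex \<Rightarrow> complex \<Rightarrow> complex" where
  "gsum S z u = infsum (tm z u) S"

lemma meander_height: "meander xs \<Longrightarrow> height xs \<ge> 0"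
  using okh_height[of 0 xs] by (simp add: meander_okh)

lemma Qs_summable: "norm z < 1/3 \<Longrightarrow> norm u \<le> 1 \<Longrightarrow> tm z u summable_on Qs j"
  by (rule tm_summable[where j=j]) (auto simp: Qs_def)

lemma Ps_summable: "norm z < 1/3 \<Longrightarrow> norm u \<le> 1 \<Longrightarrow> tm z u summable_on Ps j"
  by (rule tm_summable[where j=j]) (auto simp: Ps_def Qs_def)

lemma Ps_image:
  assumes "k \<ge> 1"
  shows "Ps k = (\<lambda>q. q @ [U2]) ` Qs (k - 1)"
proof (intro set_eqI iffI)
  fix xs assume xs: "xs \<in> Ps k"
  hence e: "xs = butlast xs @ [U2]" by (auto simp: Ps_def) (metis append_butlast_last_id)
  have "meander (butlast xs @ [U2])" "num_U2 (butlast xs @ [U2]) = k" using xs e by (auto simp: Ps_def Qs_def)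
  hence "butlast xs \<in> Qs (k - 1)" by (auto simp: Qs_def meander_okh okh_append)
  thus "xs \<in> (\<lambda>q. q @ [U2]) ` Qs (k - 1)" using e by blast
next
  fix xs assume "xs \<in> (\<lambda>q. q @ [U2]) ` Qs (k - 1)"
  then obtain q where q: "xs = q @ [U2]" "meander q" "num_U2 q = k - 1" by (auto simp: Qs_def)
  thus "xs \<in> Ps k" using assms meander_height[OF q(2)]
    by (auto simp: Ps_def Qs_def meander_okh okh_append)
qed

lemma tm_snoc_U2:
  assumes "meander q"
  shows "tm z u (q @ [U2]) = of_nat (length q + num_U2 q + 1) * (tm z u q * z * u)"
proof -
  have "nat (height q + 1) = nat (height q) + 1" using meander_height[OF assms] by simp
  thus ?thesis by (simp add: tm_def weight_snoc_U2 power_add algebra_simps)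
qed

lemma Qs0: "Qs 0 = W 0"
  by (auto simp: Qs_def W_def meander_okh num_U2_0_iff)

lemma gsum_Qs0: "gsum (Qs 0) z u = T 0 z u"
  unfolding gsum_def T_def Qs0
  by (intro infsum_cong) (auto simp: tm_def wt_def W_def weight_noU2)

definition cat2 :: "step list \<times> step list \<Rightarrow> step list" where
  "cat2 p = fst p @ snd p"

lemma cat2_inj: "inj_on cat2 (Sigma (Ps j) (\<lambda>p. W (nat (height p))))"
proof (rule inj_onI, clarsimp simp: cat2_def)
  fix p1 s1 p2 s2
  assume a: "p1 \<in> Ps j" "s1 \<in> W (nat (height p1))" "p2 \<in> Ps j" "s2 \<in> W (nat (height p2))"
     and eq: "p1 @ s1 = p2 @ s2"
  obtain us where us: "(p1 = p2 @ us \<and> us @ s1 = s2) \<or> (p1 @ us = p2 \<and> s1 = us @ s2)"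
    using eq by (auto simp: append_eq_append_conv2)
  thus "p1 = p2 \<and> s1 = s2"
  proof
    assume b: "p1 = p2 @ us \<and> us @ s1 = s2"
    show ?thesis
    proof (cases "us = []")
      case False
      hence "last us = U2" using a b by (auto simp: Ps_def)
      hence "U2 \<in> set s2" using b False by (metis Un_iff last_in_set set_append)
      thus ?thesis using a by (auto simp: W_def)
    qed (use b in auto)
  next
    assume b: "p1 @ us = p2 \<and> s1 = us @ s2"
    show ?thesis
    proof (cases "us = []")
      case False
      hence "last us = U2" using a b by (auto simp: Ps_def)
      hence "U2 \<in> set s1" using b False by (metis Un_iff last_in_set set_append)
      thus ?thesis using a by (auto simp: W_def)
    qed (use b in auto)
  qed
qed

lemma Qs_decomp:
  assumes "j \<ge> 1"
  shows "Qs j = cat2 ` (Sigma (Ps j) (\<lambda>p. W (nat (height p))))"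
proof (intro set_eqI iffI)
  fix xs assume xs: "xs \<in> Qs j"
  hence "num_U2 xs \<noteq> 0" using assms by (auto simp: Qs_def)
  hence "U2 \<in> set xs" by (simp add: num_U2_0_iff)
  then obtain ys zs where yz: "xs = ys @ U2 # zs" "U2 \<notin> set zs"
    by (metis split_list_last)
  have m: "okh 0 (ys @ [U2])" "okh (height (ys @ [U2])) zs"
    using xs yz by (auto simp: Qs_def meander_okh okh_append)
  have h1: "ys @ [U2] \<in> Ps j" using xs yz m by (auto simp: Qs_def Ps_def meander_okh num_U2_0_iff)
  have h2: "zs \<in> W (nat (height (ys @ [U2])))"
    using m yz okh_height[OF m(1)] by (auto simp: W_def)
  show "xs \<in> cat2 ` (Sigma (Ps j) (\<lambda>p. W (nat (height p))))"
  proof -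
    have "cat2 (ys @ [U2], zs) = xs" using yz by (simp add: cat2_def)
    thus ?thesis using h1 h2 by (metis SigmaI image_eqI)
  qed
next
  fix xs assume "xs \<in> cat2 ` (Sigma (Ps j) (\<lambda>p. W (nat (height p))))"
  then obtain p s where ps: "xs = p @ s" "p \<in> Ps j" "s \<in> W (nat (height p))"
    by (auto simp: cat2_def)
  have "height p \<ge> 0" using ps by (auto simp: Ps_def Qs_def meander_height)
  thus "xs \<in> Qs j" using ps by (auto simp: Qs_def Ps_def W_def meander_okh okh_append num_U2_0_iff)
qed

lemma tm_cat2:
  assumes "p \<in> Ps j" "s \<in> W (nat (height p))"
  shows "tm z u (cat2 (p, s)) = (of_nat (weight p) * z ^ length p) * wt z u (nat (height p)) s"
proof -
  have "height p \<ge> 0" using assms by (auto simp: Ps_def Qs_def meander_height)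
  moreover have "U2 \<notin> set s" using assms by (auto simp: W_def)
  ultimately show ?thesis by (simp add: tm_def wt_def cat2_def weight_append_noU2 power_add)
qed

lemma Qs_sum_T:
  assumes z: "norm z < 1/3" and u: "norm u \<le> 1" and j: "j \<ge> 1"
  shows "((\<lambda>p. (of_nat (weight p) * z ^ length p) * T (nat (height p)) z u) has_sum gsum (Qs j) z u) (Ps j)"
  unfolding gsum_def Qs_decomp[OF j]
proof (rule has_sum_prod_image[OF cat2_inj])
  show "tm z u summable_on cat2 ` (SIGMA p:Ps j. W (nat (height p)))"
    using Qs_summable[OF z u, of j] Qs_decomp[OF j] by simp
  show "tm z u (cat2 (p, s)) = (of_nat (weight p) * z ^ length p) * wt z u (nat (height p)) s"
    if "p \<in> Ps j" "s \<in> W (nat (height p))" for p s using tm_cat2[OF that] .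
  show "(wt z u (nat (height p)) has_sum T (nat (height p)) z u) (W (nat (height p)))" for p
    unfolding T_def using wt_summable[OF z u] by simp
qed

lemma geom_diff:
  fixes u e :: complex
  shows "(u - e) * (\<Sum>m\<le>c. e ^ (c - m) * u ^ m) = u * u ^ c - e * e ^ c"
  using power_diff_sumr2[of u "Suc c" e] by (simp add: lessThan_Suc_atMost mult.commute)

lemma has_sum_diff':
  fixes f g :: "'a \<Rightarrow> complex"
  assumes "(f has_sum a) A" "(g has_sum b) A"
  shows "((\<lambda>x. f x - g x) has_sum (a - b)) A"
proof -
  have "((\<lambda>x. - g x) has_sum (- b)) A" using assms(2) by (simp add: has_sum_uminus)
  from has_sum_add[OF assms(1) this] show ?thesis by simp
qed

lemma Qs_kernel:
  assumes z: "norm z < 1/3" and u: "norm u \<le> 1" and E: "norm (z * Dsum z) \<le> 1"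
    and ue: "u \<noteq> z * Dsum z" and j: "j \<ge> 1"
  shows "gsum (Qs j) z u = (u * gsum (Ps j) z u - z * Dsum z * gsum (Ps j) z (z * Dsum z)) / (u - z * Dsum z) * T 0 z u"
proof -
  define e where "e = z * Dsum z"
  have A: "((\<lambda>p. (of_nat (weight p) * z ^ length p) * T (nat (height p)) z u) has_sum gsum (Qs j) z u) (Ps j)"
    using Qs_sum_T[OF z u j] by simp
  have B1: "(tm z u has_sum gsum (Ps j) z u) (Ps j)" unfolding gsum_def using Ps_summable[OF z u] by simp
  have B2: "(tm z e has_sum gsum (Ps j) z e) (Ps j)" unfolding gsum_def using Ps_summable[OF z] E e_def by simp
  have "((\<lambda>p. (u * tm z u p - e * tm z e p) / (u - e) * T 0 z u) has_sum
         ((u * gsum (Ps j) z u - e * gsum (Ps j) z e) / (u - e) * T 0 z u)) (Ps j)"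
    by (intro has_sum_cmult_left has_sum_diff' has_sum_cmult_right B1 B2 has_sum_divide_const) 
  moreover have "(u * tm z u p - e * tm z e p) / (u - e) * T 0 z u = (of_nat (weight p) * z ^ length p) * T (nat (height p)) z u"
    if "p \<in> Ps j" for p
  proof -
    define c where "c = nat (height p)"
    define Wp where "Wp = of_nat (weight p) * z ^ length p"
    define S where "S = (\<Sum>m\<le>c. e ^ (c - m) * u ^ m)"
    have "(u - e) * S = u * u ^ c - e * e ^ c" unfolding S_def by (rule geom_diff)
    hence S: "S = (u * u ^ c - e * e ^ c) / (u - e)"
      using ue e_def by (simp add: field_simps)
    have Tc: "T c z u = S * T 0 z u" unfolding S_def e_def using T_closed[OF z u, of c] by simp
    have "u * tm z u p - e * tm z e p = Wp * (u * u ^ c - e * e ^ c)"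
      by (simp add: tm_def Wp_def c_def algebra_simps)
    hence "(u * tm z u p - e * tm z e p) / (u - e) * T 0 z u = Wp * S * T 0 z u"
      by (simp add: S)
    also have "\<dots> = Wp * T c z u" by (simp add: Tc)
    finally show ?thesis by (simp add: Wp_def c_def)
  qed
  ultimately have "((\<lambda>p. (of_nat (weight p) * z ^ length p) * T (nat (height p)) z u) has_sum
         ((u * gsum (Ps j) z u - e * gsum (Ps j) z e) / (u - e) * T 0 z u)) (Ps j)"
    by (rule has_sum_cong[THEN iffD1, rotated]) simp
  from has_sum_unique[OF A this] show ?thesis by (simp add: e_def)
qed

lemma Qs_at0:
  assumes z: "norm z < 1/3" and E: "norm (z * Dsum z) \<le> 1" and j: "j \<ge> 1"
  shows "gsum (Qs j) z 0 = gsum (Ps j) z (z * Dsum z) * Dsum z"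
proof -
  define e where "e = z * Dsum z"
  have A: "((\<lambda>p. (of_nat (weight p) * z ^ length p) * T (nat (height p)) z 0) has_sum gsum (Qs j) z 0) (Ps j)"
    using Qs_sum_T[OF z _ j] by simp
  have B2: "(tm z e has_sum gsum (Ps j) z e) (Ps j)" unfolding gsum_def using Ps_summable[OF z] E e_def by simp
  hence "((\<lambda>p. tm z e p * Dsum z) has_sum (gsum (Ps j) z e * Dsum z)) (Ps j)"
    by (rule has_sum_cmult_left)
  moreover have "tm z e p * Dsum z = (of_nat (weight p) * z ^ length p) * T (nat (height p)) z 0" for p
  proof -
    have "(\<Sum>m\<le>nat (height p). e ^ (nat (height p) - m) * (0::complex) ^ m) = e ^ nat (height p)"
      by (subst sum.atMost_shift) simp
    thus ?thesis using T_closed[OF z, of 0 "nat (height p)"] e_def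
      by (simp add: tm_def T_u0 algebra_simps)
  qed
  ultimately have "((\<lambda>p. (of_nat (weight p) * z ^ length p) * T (nat (height p)) z 0) has_sum
         (gsum (Ps j) z e * Dsum z)) (Ps j)" by simp
  from has_sum_unique[OF A this] show ?thesis by (simp add: e_def)
qed



lemma Dsum_closed:
  assumes z0: "z \<noteq> 0" and z: "norm z < 1/4"
  shows "Dsum z = Dgf z"
proof -
  define D where "D = Dsum z"
  have z3: "norm z < 1/3" using z by simp
  have eq: "D * (1 - z * (z * D)) = 1" using Dsum_eq[OF z3] by (simp add: D_def)
  have bD: "norm D \<le> 1 / (1 - 3 * norm z)" using Dsum_bound[OF z3] by (simp add: D_def)
  have "1 / (1 - 3 * norm z) < 4" using z by (simp add: field_simps)
  hence bD4: "norm D < 4" using bD by simp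
  have sq0: "(2 * z^2 * D - 1)^2 = 1 - 4 * z^2" using eq by algebra
  have sq: "(2 * z^2 * D - 1)^2 = (csqrt (1 - 4 * z^2))^2" using sq0 by simp
  have ne: "2 * z^2 * D - 1 \<noteq> csqrt (1 - 4 * z^2)"
  proof
    assume a: "2 * z^2 * D - 1 = csqrt (1 - 4 * z^2)"
    have "Re (2 * z^2 * D - 1) \<ge> 0" unfolding a by (rule Re_csqrt)
    hence "1 \<le> Re (2 * z^2 * D)" by simp
    also have "\<dots> \<le> norm (2 * z^2 * D)" by (rule complex_Re_le_cmod)
    also have "\<dots> = 2 * norm z ^ 2 * norm D" by (simp add: norm_mult norm_power)
    also have "\<dots> \<le> 2 * (1/4)^2 * 4"
    proof -
      have "norm z ^ 2 \<le> (1/4)^2" using z by (intro power_mono) auto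
      thus ?thesis using bD4 by (intro mult_mono) auto
    qed
    finally show False by (simp add: power2_eq_square)
  qed
  have m: "2 * z^2 * D - 1 = - csqrt (1 - 4 * z^2)"
    using sq ne power2_eq_iff by blast
  have z2: "2 * z^2 \<noteq> 0" using z0 by simp
  have h: "D * (2 * z^2) = 1 - csqrt (1 - 4 * z^2)" using m by algebra
  have "D = (1 - csqrt (1 - 4 * z^2)) / (2 * z^2)"
    using h z2 by (simp add: eq_divide_eq)
  thus ?thesis unfolding D_def Dgf_def .
qed

lemma Egf_eq:
  assumes z0: "z \<noteq> 0" and z: "norm z < 1/4"
  shows "z * Dsum z = Egf z"
proof -
  have "z * ((1 - csqrt (1 - 4 * z\<^sup>2)) / (2 * z\<^sup>2)) = (1 - csqrt (1 - 4 * z\<^sup>2)) / (2 * z)"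
    using z0 by (simp add: power2_eq_square)
  thus ?thesis using Dsum_closed[OF assms] by (simp add: Dgf_def Egf_def)
qed

lemma E_bound:
  assumes z: "norm z < 1/4"
  shows "norm (z * Dsum z) < 1"
proof -
  have z3: "norm z < 1/3" using z by simp
  have "norm (z * Dsum z) \<le> norm z * (1 / (1 - 3 * norm z))"
    unfolding norm_mult by (intro mult_left_mono Dsum_bound[OF z3]) auto
  also have "\<dots> < 1" using z by (simp add: field_simps)
  finally show ?thesis .
qed

lemma Mup_eq:
  assumes z0: "z \<noteq> 0" and z: "norm z < 1/4" and u: "norm u \<le> 1"
  shows "Mup z u = z * u * T 0 z u"
proof -
  have z3: "norm z < 1/3" using z by simp
  define E where "E = z * Dsum z"
  have EE: "E = Egf z" using Egf_eq[OF z0 z] by (simp add: E_def)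
  have Eb: "norm E < 1" using E_bound[OF z] by (simp add: E_def)
  have T0: "T 0 z u * (1 - z * u - z * E) = 1" using T0_eq[OF z3 u] by (simp add: E_def)
  have Erel0: "z * Dsum z = z + z * (z * Dsum z)^2" using Dsum_eq[OF z3] by algebra
  have Erel: "E = z + z * E^2" using Erel0 by (simp add: E_def)
  have nz: "1 - u * E \<noteq> 0"
  proof
    assume "1 - u * E = 0"
    hence "u * E = 1" by simp
    hence "norm (u * E) = 1" by simp
    moreover have "norm (u * E) \<le> 1 * norm E"
      unfolding norm_mult by (rule mult_right_mono) (use u in auto)
    ultimately show False using Eb by simp
  qed
  have "z * u * T 0 z u * (1 - u * E) = u * E * (T 0 z u * (1 - z * u - z * E))"
    using Erel by algebra
  also have "\<dots> = u * E" using T0 by simp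
  finally have "z * u * T 0 z u = u * E / (1 - u * E)" using nz by (simp add: eq_divide_eq)
  thus ?thesis by (simp add: Mup_def EE)
qed



lemma finite_len_fiber: "finite {xs \<in> (S :: step list set). length xs = (n::nat)}"
  by (rule finite_subset[OF _ finite_paths_len[of n]]) auto

lemma Fgf_fiber:
  "(\<Sum>xs\<in>{xs \<in> Ps k. length xs = n}. tm z u xs) = (\<Sum>l\<le>n. of_nat (fcoef k n l) * z ^ n * u ^ l)"
proof -
  let ?A = "{xs \<in> Ps k. length xs = n}"
  have gA: "(\<lambda>xs. nat (height xs)) ` ?A \<subseteq> {..n}"
    using height_le_length by (auto simp: nat_le_iff)
  have "(\<Sum>xs\<in>?A. tm z u xs) = (\<Sum>l\<le>n. \<Sum>xs\<in>{xs \<in> ?A. nat (height xs) = l}. tm z u xs)"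
    by (rule sum.group[symmetric]) (use finite_len_fiber gA in auto)
  also have "\<dots> = (\<Sum>l\<le>n. of_nat (fcoef k n l) * z ^ n * u ^ l)"
  proof (rule sum.cong[OF refl])
    fix l assume "l \<in> {..n}"
    have B: "{xs \<in> ?A. nat (height xs) = l} = {xs\<in>paths_len n. meander xs \<and> num_U2 xs = k \<and> xs \<noteq> [] \<and>
       last xs = U2 \<and> height xs = int l}"
      by (auto simp: Ps_def Qs_def paths_len_all dest: meander_height)
    have "(\<Sum>xs\<in>{xs \<in> ?A. nat (height xs) = l}. tm z u xs) = (\<Sum>xs\<in>{xs \<in> ?A. nat (height xs) = l}. of_nat (weight xs) * z ^ n * u ^ l)"
      by (rule sum.cong) (auto simp: tm_def)
    also have "\<dots> = of_nat (fcoef k n l) * z ^ n * u ^ l"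
      unfolding fcoef_def B[symmetric] by (simp add: sum_distrib_right)
    finally show "(\<Sum>xs\<in>{xs \<in> ?A. nat (height xs) = l}. tm z u xs) = of_nat (fcoef k n l) * z ^ n * u ^ l" .
  qed
  finally show ?thesis .
qed

lemma Fgf_gsum:
  assumes k: "k \<ge> 1" and z: "norm z < 1/3" and u: "norm u \<le> 1"
  shows "Fgf k z u = gsum (Ps k) z u"
proof -
  have "(\<lambda>n. \<Sum>xs\<in>{xs \<in> Ps k. length xs = n}. tm z u xs) sums gsum (Ps k) z u"
    unfolding gsum_def by (rule group_by_length'[OF Ps_summable[OF z u]])
  hence "(\<lambda>n. \<Sum>l\<le>n. of_nat (fcoef k n l) * z ^ n * u ^ l) sums gsum (Ps k) z u"
    by (simp add: Fgf_fiber)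
  thus ?thesis using k by (simp add: Fgf_def sums_iff)
qed

lemma Bgf_gsum:
  assumes z: "norm z < 1/3"
  shows "Bgf k z = gsum (Qs k) z 0"
proof -
  have "(\<lambda>n. \<Sum>xs\<in>{xs \<in> Qs k. length xs = n}. tm z 0 xs) sums gsum (Qs k) z 0"
    unfolding gsum_def by (rule group_by_length'[OF Qs_summable[OF z]]) simp
  moreover have "(\<Sum>xs\<in>{xs \<in> Qs k. length xs = n}. tm z 0 xs) = of_nat (bcoef k n) * z ^ n" for n
  proof -
    let ?A = "{xs \<in> Qs k. length xs = n}"
    have "(\<Sum>xs\<in>?A. tm z 0 xs) = (\<Sum>xs\<in>?A. if height xs = 0 then of_nat (weight xs) * z ^ n else 0)"
      by (rule sum.cong) (auto simp: tm_def Qs_def dest: meander_height)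
    also have "\<dots> = (\<Sum>xs\<in>{xs \<in> ?A. height xs = 0}. of_nat (weight xs) * z ^ n)"
      by (rule sum.inter_filter[symmetric]) (rule finite_len_fiber)
    also have "{xs \<in> ?A. height xs = 0} = {xs\<in>paths_len n. meander xs \<and> num_U2 xs = k \<and> height xs = 0}"
      by (auto simp: Qs_def paths_len_all)
    also have "(\<Sum>xs\<in>{xs\<in>paths_len n. meander xs \<and> num_U2 xs = k \<and> height xs = 0}. of_nat (weight xs) * z ^ n)
        = of_nat (bcoef k n) * z ^ n"
      unfolding bcoef_def by (simp add: sum_distrib_right)
    finally show ?thesis .
  qed
  ultimately have "(\<lambda>n. of_nat (bcoef k n) * z ^ n) sums gsum (Qs k) z 0" by simp
  thus ?thesis by (simp add: Bgf_def sums_iff)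
qed

lemma part_B:
  assumes z0: "z \<noteq> 0" and z: "norm z < 1/4"
  shows "Bgf k z = Fgf k z (Egf z) * Dgf z"
proof -
  have z3: "norm z < 1/3" using z by simp
  have Eb: "norm (z * Dsum z) \<le> 1" using E_bound[OF z] by simp
  have B: "Bgf k z = gsum (Qs k) z 0" by (rule Bgf_gsum[OF z3])
  show ?thesis
  proof (cases "k = 0")
    case True
    thus ?thesis using B gsum_Qs0 T_u0 Dsum_closed[OF z0 z] by (simp add: Fgf_def)
  next
    case False
    hence "gsum (Qs k) z 0 = gsum (Ps k) z (z * Dsum z) * Dsum z"
      using Qs_at0[OF z3 Eb] by simp
    also have "gsum (Ps k) z (z * Dsum z) = Fgf k z (Egf z)"
      using Fgf_gsum[OF _ z3 Eb, of k] False Egf_eq[OF z0 z] by simp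
    finally show ?thesis using B Dsum_closed[OF z0 z] by simp
  qed
qed



definition acoef :: "nat \<Rightarrow> complex \<Rightarrow> nat \<Rightarrow> complex" where
  "acoef j u n = (\<Sum>q\<in>{q \<in> Qs j. length q = n}. tm 1 u q * u)"

lemma tm_scale: "tm w u q = tm 1 u q * w ^ length q"
  by (simp add: tm_def)

lemma a_sums:
  assumes u: "norm u \<le> 1" and w: "norm w < 1/3"
  shows "(\<lambda>n. acoef j u n * w ^ n) sums (u * gsum (Qs j) w u)"
proof -
  have "(\<lambda>n. \<Sum>q\<in>{q \<in> Qs j. length q = n}. tm w u q) sums gsum (Qs j) w u"
    unfolding gsum_def by (rule group_by_length'[OF Qs_summable[OF w u]])
  hence "(\<lambda>n. u * (\<Sum>q\<in>{q \<in> Qs j. length q = n}. tm w u q)) sums (u * gsum (Qs j) w u)"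
    by (rule sums_mult)
  moreover have "u * (\<Sum>q\<in>{q \<in> Qs j. length q = n}. tm w u q) = acoef j u n * w ^ n" for n
  proof -
    have "u * (\<Sum>q\<in>{q \<in> Qs j. length q = n}. tm w u q) = (\<Sum>q\<in>{q \<in> Qs j. length q = n}. tm 1 u q * u * w ^ n)"
      unfolding sum_distrib_left by (rule sum.cong) (auto simp: tm_scale[of w])
    thus ?thesis by (simp add: acoef_def sum_distrib_right)
  qed
  ultimately show ?thesis by simp
qed

lemma F_sums:
  assumes k: "k \<ge> 1" and z: "norm z < 1/3" and u: "norm u \<le> 1"
  shows "(\<lambda>n. of_nat (n + k) * acoef (k - 1) u n * z ^ (n + 1)) sums Fgf k z u"
proof -
  define g where "g q = tm z u (q @ [U2])" for q
  have inj: "inj_on (\<lambda>q. q @ [U2]) (Qs (k - 1))" by (rule inj_onI) simp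
  have smP: "tm z u summable_on ((\<lambda>q. q @ [U2]) ` Qs (k - 1))"
    using Ps_summable[OF z u, of k] Ps_image[OF k] by simp
  have smg: "g summable_on Qs (k - 1)"
    unfolding g_def using summable_on_reindex[OF inj, of "tm z u"] smP by (auto simp: comp_def)
  have "Fgf k z u = infsum (tm z u) ((\<lambda>q. q @ [U2]) ` Qs (k - 1))"
    using Fgf_gsum[OF k z u] Ps_image[OF k] by (simp add: gsum_def)
  also have "\<dots> = infsum g (Qs (k - 1))"
    unfolding g_def using infsum_reindex[OF inj] by (simp add: comp_def)
  finally have F: "Fgf k z u = infsum g (Qs (k - 1))" .
  have "(\<lambda>n. \<Sum>q\<in>{q \<in> Qs (k - 1). length q = n}. g q) sums infsum g (Qs (k - 1))"
    by (rule group_by_length'[OF smg])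
  moreover have "(\<Sum>q\<in>{q \<in> Qs (k - 1). length q = n}. g q) = of_nat (n + k) * acoef (k - 1) u n * z ^ (n + 1)" for n
  proof -
    have "(\<Sum>q\<in>{q \<in> Qs (k - 1). length q = n}. g q) =
          (\<Sum>q\<in>{q \<in> Qs (k - 1). length q = n}. of_nat (n + k) * z ^ (n + 1) * (tm 1 u q * u))"
    proof (rule sum.cong[OF refl])
      fix q assume q: "q \<in> {q \<in> Qs (k - 1). length q = n}"
      hence "meander q" "num_U2 q = k - 1" "length q = n" by (auto simp: Qs_def)
      moreover have "length q + (k - 1) + 1 = n + k" using k \<open>length q = n\<close> by simp
      ultimately show "g q = of_nat (n + k) * z ^ (n + 1) * (tm 1 u q * u)"
        unfolding g_def by (simp add: tm_snoc_U2 tm_scale[of z] algebra_simps)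
    qed
    thus ?thesis by (simp add: acoef_def sum_distrib_left algebra_simps)
  qed
  ultimately show ?thesis using F by simp
qed

lemma Egf_cont: "continuous_on {w. w \<noteq> 0 \<and> norm w < 1/4} Egf"
proof -
  have ns: "1 - 4 * w\<^sup>2 \<in> - \<real>\<^sub>\<le>\<^sub>0" if "w \<in> {w. w \<noteq> 0 \<and> norm w < 1/4}" for w :: complex
  proof -
    have "norm w < 1/4" using that by simp
    have "Re (w\<^sup>2) \<le> norm (w\<^sup>2)" by (rule complex_Re_le_cmod)
    also have "\<dots> = norm w ^ 2" by (simp add: norm_power)
    also have "\<dots> \<le> (1/4)^2" using \<open>norm w < 1/4\<close> by (intro power_mono) auto
    finally have "Re (w\<^sup>2) \<le> 1/16" by (simp add: power2_eq_square)
    hence "Re (1 - 4 * w\<^sup>2) > 0" by simp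
    thus ?thesis by (auto simp: complex_nonpos_Reals_iff)
  qed
  have c1: "continuous_on {w. w \<noteq> 0 \<and> norm w < 1/4} (\<lambda>w. csqrt (1 - 4 * w\<^sup>2))"
    by (rule continuous_on_compose2[OF continuous_on_csqrt _ ]) (use ns in \<open>auto intro!: continuous_intros\<close>)
  show ?thesis unfolding Egf_def[abs_def]
    by (intro continuous_intros c1) auto
qed

lemma open_S: "open {w. w \<noteq> 0 \<and> norm w < 1/4 \<and> u \<noteq> Egf w}"
proof -
  have oA: "open {w::complex. w \<noteq> 0 \<and> norm w < 1/4}"
  proof -
    have "{w::complex. w \<noteq> 0 \<and> norm w < 1/4} = ball 0 (1/4) - {0}" by (auto simp: dist_norm)
    thus ?thesis using open_delete[OF open_ball] by metis
  qed
  have "open (Egf -` (- {u}) \<inter> {w. w \<noteq> 0 \<and> norm w < 1/4})"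
    using Egf_cont oA continuous_on_open_vimage by blast
  moreover have "Egf -` (- {u}) \<inter> {w. w \<noteq> 0 \<and> norm w < 1/4} = {w. w \<noteq> 0 \<and> norm w < 1/4 \<and> u \<noteq> Egf w}"
    by auto
  ultimately show ?thesis by simp
qed

lemma h_eq:
  assumes k: "k \<ge> 1" and u: "norm u < 1" and w0: "w \<noteq> 0" and w: "norm w < 1/4" and ue: "u \<noteq> Egf w"
  shows "w powi (int k - 1) * ((u * Fgf (k - 1) w u - Egf w * Fgf (k - 1) w (Egf w)) / (u - Egf w)) * Mup w u
         = w ^ k * (\<Sum>n. acoef (k - 1) u n * w ^ n)"
proof -
  have w3: "norm w < 1/3" using w by simp
  have u1: "norm u \<le> 1" using u by simp
  have P: "(\<Sum>n. acoef (k - 1) u n * w ^ n) = u * gsum (Qs (k - 1)) w u"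
    using a_sums[OF u1 w3] by (simp add: sums_iff)
  have pw: "w powi (int k - 1) = w ^ (k - 1)"
    using k by (metis of_nat_1 of_nat_diff power_int_of_nat)
  have M: "Mup w u = w * u * T 0 w u" by (rule Mup_eq[OF w0 w u1])
  have Eeq: "Egf w = w * Dsum w" using Egf_eq[OF w0 w] by simp
  have Eb: "norm (w * Dsum w) \<le> 1" using E_bound[OF w] by simp
  have ne: "u - Egf w \<noteq> 0" using ue by simp
  have X: "((u * Fgf (k - 1) w u - Egf w * Fgf (k - 1) w (Egf w)) / (u - Egf w)) * Mup w u
        = w * u * gsum (Qs (k - 1)) w u"
  proof (cases "k = 1")
    case True
    thus ?thesis using ne by (simp add: Fgf_def M gsum_Qs0)
  next
    case False
    hence j: "k - 1 \<ge> 1" using k by simp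
    have "Fgf (k - 1) w u = gsum (Ps (k - 1)) w u" by (rule Fgf_gsum[OF j w3 u1])
    moreover have "Fgf (k - 1) w (Egf w) = gsum (Ps (k - 1)) w (w * Dsum w)"
      unfolding Eeq by (rule Fgf_gsum[OF j w3 Eb])
    moreover have "gsum (Qs (k - 1)) w u = (u * gsum (Ps (k - 1)) w u - w * Dsum w * gsum (Ps (k - 1)) w (w * Dsum w)) / (u - w * Dsum w) * T 0 w u"
      by (rule Qs_kernel[OF w3 u1 Eb _ j]) (use ue Eeq in simp)
    ultimately show ?thesis unfolding M Eeq by (simp add: algebra_simps)
  qed
  have wk: "w ^ k = w ^ (k - 1) * w" using k by (metis Suc_diff_le diff_Suc_1 power_Suc2)
  let ?Q = "(u * Fgf (k - 1) w u - Egf w * Fgf (k - 1) w (Egf w)) / (u - Egf w)"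
  have "w powi (int k - 1) * ?Q * Mup w u = w ^ (k - 1) * (?Q * Mup w u)"
    unfolding pw by (rule mult.assoc)
  also have "\<dots> = w ^ (k - 1) * (w * u * gsum (Qs (k - 1)) w u)" unfolding X ..
  also have "\<dots> = w ^ k * (u * gsum (Qs (k - 1)) w u)" unfolding wk by (simp only: mult_ac)
  finally show ?thesis unfolding P .
qed

lemma part_A:
  assumes k: "k \<ge> 1" and z0: "z \<noteq> 0" and z: "norm z < 1/4" and u: "norm u < 1" and ue: "u \<noteq> Egf z"
  shows "Fgf k z u = (1 / z powi (int k - 2)) *
              deriv (\<lambda>w. w powi (int k - 1) *
                 ((u * Fgf (k - 1) w u - Egf w * Fgf (k - 1) w (Egf w)) / (u - Egf w)) *
                 Mup w u) z"
proof -
  define a where "a = acoef (k - 1) u"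
  define P where "P w = (\<Sum>n. a n * w ^ n)" for w
  define P' where "P' = (\<Sum>n. diffs a n * z ^ n)"
  have u1: "norm u \<le> 1" using u by simp
  have z3: "norm z < 1/3" using z by simp
  have small: "summable (\<lambda>n. a n * x ^ n)" if "norm x < 1/3" for x
    using a_sums[OF u1 that] unfolding a_def by (rule sums_summable)
  define r where "r = (norm z + 1/4) / 2"
  define K :: complex where "K = of_real r"
  have r0: "r \<ge> 0" by (simp add: r_def)
  have nK: "norm K = r" unfolding K_def using r0 by simp
  have K1: "norm K < 1/3" "norm z < norm K" using z unfolding nK r_def by auto
  have dP: "(P has_field_derivative P') (at z)"
    unfolding P_def[abs_def] P'_def by (rule termdiffs_strong[OF small[OF K1(1)] K1(2)])
  have dF: "((\<lambda>w. w ^ k * P w) has_field_derivative (of_nat k * z ^ (k - 1) * P z + z ^ k * P')) (at z)"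
  proof -
    have dpow: "((\<lambda>w. w ^ k) has_field_derivative of_nat k * z ^ (k - 1)) (at z)"
      by (auto intro!: derivative_eq_intros)
    show ?thesis using DERIV_mult[OF dpow dP] by (simp add: algebra_simps)
  qed
  define S where "S = {w. w \<noteq> 0 \<and> norm w < 1/4 \<and> u \<noteq> Egf w}"
  have "((\<lambda>w. w powi (int k - 1) *
                 ((u * Fgf (k - 1) w u - Egf w * Fgf (k - 1) w (Egf w)) / (u - Egf w)) *
                 Mup w u) has_field_derivative (of_nat k * z ^ (k - 1) * P z + z ^ k * P')) (at z)"
  proof (rule has_field_derivative_transform_within_open[OF dF])
    show "open S" unfolding S_def by (rule open_S)
    show "z \<in> S" using z0 z ue by (simp add: S_def)
    fix w assume "w \<in> S"
    thus "w ^ k * P w = w powi (int k - 1) *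
                 ((u * Fgf (k - 1) w u - Egf w * Fgf (k - 1) w (Egf w)) / (u - Egf w)) * Mup w u"
      using h_eq[OF k u] by (simp add: S_def P_def a_def)
  qed
  hence D: "deriv (\<lambda>w. w powi (int k - 1) *
                 ((u * Fgf (k - 1) w u - Egf w * Fgf (k - 1) w (Egf w)) / (u - Egf w)) *
                 Mup w u) z = of_nat k * z ^ (k - 1) * P z + z ^ k * P'"
    by (rule DERIV_imp_deriv)
  have s1: "(\<lambda>n. a n * z ^ n) sums P z" unfolding P_def using small[OF z3] by (simp add: summable_sums)
  have s2: "(\<lambda>n. diffs a n * z ^ n) sums P'"
  proof -
    have "summable (\<lambda>n. diffs a n * z ^ n)"
      by (rule termdiff_converges[where K="1/3"]) (use z3 small in auto)
    thus ?thesis unfolding P'_def by (simp add: summable_sums)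
  qed
  have s3: "(\<lambda>n. of_nat n * a n * z ^ (n + 1)) sums (z^2 * P')"
  proof -
    have "(\<lambda>n. z^2 * (diffs a n * z ^ n)) sums (z^2 * P')" by (rule sums_mult[OF s2])
    hence "(\<lambda>n. of_nat (Suc n) * a (Suc n) * z ^ (Suc n + 1)) sums (z^2 * P')"
      by (simp add: diffs_def power2_eq_square algebra_simps)
    thus ?thesis by (subst (asm) sums_Suc_iff) simp
  qed
  have s4: "(\<lambda>n. of_nat k * a n * z ^ (n + 1)) sums (of_nat k * z * P z)"
    using sums_mult[OF s1, of "of_nat k * z"] by (simp add: algebra_simps)
  have "(\<lambda>n. of_nat n * a n * z ^ (n + 1) + of_nat k * a n * z ^ (n + 1)) sums (z^2 * P' + of_nat k * z * P z)"
    by (rule sums_add[OF s3 s4])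
  hence "(\<lambda>n. of_nat (n + k) * a n * z ^ (n + 1)) sums (z^2 * P' + of_nat k * z * P z)"
    by (simp add: algebra_simps)
  moreover have "(\<lambda>n. of_nat (n + k) * a n * z ^ (n + 1)) sums Fgf k z u"
    unfolding a_def by (rule F_sums[OF k z3 u1])
  ultimately have F: "Fgf k z u = z^2 * P' + of_nat k * z * P z"
    using sums_unique2 by blast
  define X where "X = z powi (int k - 2)"
  have X0: "X \<noteq> 0" using z0 by (simp add: X_def)
  have X1: "X * z = z ^ (k - 1)"
  proof -
    have e: "int k - 2 + 1 = int (k - 1)" using k by simp
    have "z ^ (k - 1) = z powi (int (k - 1))" by (rule power_int_of_nat[symmetric])
    also have "\<dots> = z powi (int k - 2 + 1)" by (simp only: e)
    also have "\<dots> = X * z powi 1" unfolding X_def by (rule power_int_add) (use z0 in simp)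
    also have "\<dots> = X * z" by simp
    finally show ?thesis ..
  qed
  have wk: "z ^ k = z ^ (k - 1) * z" using k by (metis Suc_diff_le diff_Suc_1 power_Suc2)
  have X2: "X * z^2 = z ^ k"
  proof -
    have "X * z^2 = (X * z) * z" by (simp add: power2_eq_square mult.assoc)
    also have "\<dots> = z ^ (k - 1) * z" by (simp only: X1)
    finally show ?thesis using wk by simp
  qed
  have "of_nat k * z ^ (k - 1) * P z + z ^ k * P' = X * (of_nat k * z * P z + z^2 * P')"
  proof -
    have "of_nat k * z ^ (k - 1) * P z + z ^ k * P' = of_nat k * (X * z) * P z + (X * z^2) * P'"
      by (simp only: X1 X2)
    thus ?thesis by (simp add: distrib_left mult_ac)
  qed
  hence "(1 / X) * (of_nat k * z ^ (k - 1) * P z + z ^ k * P') = of_nat k * z * P z + z^2 * P'"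
    using X0 by simp
  thus ?thesis unfolding D X_def[symmetric] F by (simp add: add.commute)
qed

theorem theorem13:
  shows "(\<forall>k z u. k \<ge> 1 \<longrightarrow> z \<noteq> 0 \<longrightarrow> norm z < 1/4 \<longrightarrow> norm u < 1 \<longrightarrow> u \<noteq> Egf z \<longrightarrow>
            Fgf k z u = (1 / z powi (int k - 2)) *
              deriv (\<lambda>w. w powi (int k - 1) *
                 ((u * Fgf (k - 1) w u - Egf w * Fgf (k - 1) w (Egf w)) / (u - Egf w)) *
                 Mup w u) z)
       \<and> (\<forall>k z. z \<noteq> 0 \<longrightarrow> norm z < 1/4 \<longrightarrow> Bgf k z = Fgf k z (Egf z) * Dgf z)"
proof (intro conjI allI impI)
  fix k :: nat and z u :: complex
  assume "1 \<le> k" "z \<noteq> 0" "norm z < 1/4" "norm u < 1" "u \<noteq> Egf z"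
  thus "Fgf k z u = (1 / z powi (int k - 2)) *
              deriv (\<lambda>w. w powi (int k - 1) *
                 ((u * Fgf (k - 1) w u - Egf w * Fgf (k - 1) w (Egf w)) / (u - Egf w)) *
                 Mup w u) z" by (rule part_A)
next
  fix k :: nat and z :: complex
  assume "z \<noteq> 0" "norm z < 1/4"
  thus "Bgf k z = Fgf k z (Egf z) * Dgf z" by (rule part_B)
qed


end
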